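(* For $x\in\mathbb X$ let $\bar\varrho_1(x):=\inf\{\|\xi\|_{\mathbb X_A'}:\xi\in\mathbb X_A',\ \xi|_{\mathbb X}\in\partial\mathcal R(x)\}$ (with $\inf\emptyset=\infty$). Then $\frac1M\varrho_1(x)\le\bar\varrho_1(x)\le M\varrho_1(x)$ for all $x\in\mathbb X$. In particular, $x\in K_1$ if and only if there exists $\xi\in\mathbb X_A'$ with $\xi|_{\mathbb X}\in\partial\mathcal R(x)$.
   Context: $\mathbb X$, $\mathbb X_A$ real Banach spaces with a continuous dense embedding $\mathbb X\subset\mathbb X_A$; $\mathbb Y$ real Hilbert space; $A:\mathbb X_A\to\mathbb Y$ bounded linear with $\frac1M\|x\|_{\mathbb X_A}\le\|Ax\|_{\mathbb Y}\le M\|x\|_{\mathbb X_A}$ for all $x\in\mathbb X_A$, some $M\ge1$. $\mathcal R(x):=\frac1u\|x\|_{\mathbb X}^u$ with fixed $u\in[1,\infty)$. If $\mathbb X$ is not reflexive, assume there is a topology $\tau$ on $\mathbb X$, making it locally convex Hausdorff, in which sublevel sets of $\mathcal R$ are $\tau$-compact and $A|_{\mathbb X}$ is $\tau$-to-weak continuous. $R_\alpha(g):=\operatorname{argmin}_{x\in\mathbb X}(\frac1{2\alpha}\|g-Ax\|^2_{\mathbb Y}+\mathcal R(x))$, $\varrho_1(x):=\sup\{\alpha^{-1}\|Ax-Ax_\alpha\|_{\mathbb Y}:\alpha>0,x_\alpha\in R_\alpha(Ax)\}$, $K_1:=\{x\in\mathbb X:\varrho_1(x)<\infty\}$. $\partial\mathcal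 R(x)\subset\mathbb X'$ is the subdifferential: $\eta\in\partial\mathcal R(x)$ iff $\mathcal R(z)\ge\mathcal R(x)+\eta(z-x)$ for all $z\in\mathbb X$. *)

theory Defs
  imports "HOL-Analysis.Analysis" "HOL-Library.Extended_Real"
begin

definition regR :: "real \<Rightarrow> 'x::real_normed_vector \<Rightarrow> real" where
  "regR u x = (norm x powr u) / u"

text \<open>Tikhonov minimisers R_alpha(g) (the argmin set, possibly empty in general).
  The embedding X into X_A is the map j, and A acts on X_A.\<close>
definition tik_min ::
  "('xa::real_normed_vector \<Rightarrow> 'y::real_inner) \<Rightarrow> ('x::real_normed_vector \<Rightarrow> 'xa) \<Rightarrow> real
     \<Rightarrow> real \<Rightarrow> 'y \<Rightarrow> 'x set" where
  "tik_min A j u \<alpha> g =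
     {x. \<forall>z. (norm (g - A (j x)))\<^sup>2 / (2 * \<alpha>) + regR u x
            \<le> (norm (g - A (j z)))\<^sup>2 / (2 * \<alpha>) + regR u z}"

definition rho1 ::
  "('xa::real_normed_vector \<Rightarrow> 'y::real_inner) \<Rightarrow> ('x::real_normed_vector \<Rightarrow> 'xa) \<Rightarrow> real
     \<Rightarrow> 'x \<Rightarrow> ereal" where
  "rho1 A j u x = Sup {ereal (norm (A (j x) - A (j xa)) / \<alpha>) | \<alpha> xa.
                        \<alpha> > 0 \<and> xa \<in> tik_min A j u \<alpha> (A (j x))}"

definition K1 ::
  "('xa::real_normed_vector \<Rightarrow> 'y::real_inner) \<Rightarrow> ('x::real_normed_vector \<Rightarrow> 'xa) \<Rightarrow> real
     \<Rightarrow> 'x set" where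
  "K1 A j u = {x. rho1 A j u x < \<infinity>}"

definition subdiff_R :: "real \<Rightarrow> 'x::real_normed_vector \<Rightarrow> ('x \<Rightarrow> real) set" where
  "subdiff_R u x = {\<eta>. bounded_linear \<eta> \<and> (\<forall>z. regR u z \<ge> regR u x + \<eta> (z - x))}"

text \<open>bar rho_1(x) = inf { norm xi in X_A' : xi in X_A', xi restricted to X in dR(x) }
  (infimum of the empty set is \<infinity> in ereal).  The dual norm is the operator norm.\<close>
definition rho1_bar ::
  "('x::real_normed_vector \<Rightarrow> 'xa::real_normed_vector) \<Rightarrow> real \<Rightarrow> 'x \<Rightarrow> ereal" where
  "rho1_bar j u x = Inf {ereal (onorm \<xi>) | \<xi>. bounded_linear \<xi> \<and> (\<xi> \<circ> j) \<in> subdiff_R u x}"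

text \<open>Reflexivity: the canonical embedding of X into its bidual is surjective.
  Elements of the bidual are bounded linear functionals on the dual space
  (the dual space = bounded linear functionals X \<Rightarrow> real with the operator norm).\<close>
definition reflexive_space :: "'x::real_normed_vector itself \<Rightarrow> bool" where
  "reflexive_space _ \<longleftrightarrow>
     (\<forall>\<Phi> :: ('x \<Rightarrow> real) \<Rightarrow> real.
        ((\<forall>f g. bounded_linear f \<longrightarrow> bounded_linear g \<longrightarrow> \<Phi> (\<lambda>x. f x + g x) = \<Phi> f + \<Phi> g)
         \<and> (\<forall>c f. bounded_linear f \<longrightarrow> \<Phi> (\<lambda>x. c * f x) = c * \<Phi> f)
         \<and> (\<exists>C. \<forall>f. bounded_linear f \<longrightarrow> \<bar>\<Phi> f\<bar> \<le> C * onorm f))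
        \<longrightarrow> (\<exists>x. \<forall>f. bounded_linear f \<longrightarrow> \<Phi> f = f x))"

definition weak_top :: "'y::real_inner topology" where
  "weak_top = topology_generated_by {(\<lambda>y. inner y v) -` U | v U. open U}"

definition locally_convex_Hausdorff :: "'x::real_normed_vector topology \<Rightarrow> bool" where
  "locally_convex_Hausdorff \<tau> \<longleftrightarrow>
     topspace \<tau> = UNIV \<and> Hausdorff_space \<tau>
     \<and> continuous_map (prod_topology \<tau> \<tau>) \<tau> (\<lambda>(x, y). x + y)
     \<and> continuous_map (prod_topology euclideanreal \<tau>) \<tau> (\<lambda>(c, x). c *\<^sub>R x)
     \<and> (\<forall>U. openin \<tau> U \<and> 0 \<in> U \<longrightarrow> (\<exists>V. openin \<tau> V \<and> convex V \<and> 0 \<in> V \<and> V \<subseteq> U))"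

text \<open>Standing assumption when X is not reflexive.\<close>
definition admissible_topology ::
  "('xa::real_normed_vector \<Rightarrow> 'y::real_inner) \<Rightarrow> ('x::real_normed_vector \<Rightarrow> 'xa) \<Rightarrow> real
     \<Rightarrow> 'x topology \<Rightarrow> bool" where
  "admissible_topology A j u \<tau> \<longleftrightarrow>
     locally_convex_Hausdorff \<tau>
     \<and> (\<forall>c. compactin \<tau> {x. regR u x \<le> c})
     \<and> continuous_map \<tau> weak_top (\<lambda>x. A (j x))"

end

theory Submission
  imports Defs
begin

definition ultra_nat :: "nat filter \<Rightarrow> bool" where
  "ultra_nat U \<longleftrightarrow> U \<noteq> bot \<and> U \<le> sequentially \<and> (\<forall>P. eventually P U \<or> eventually (\<lambda>x. \<not> P x) U)"

definition good_fs :: "(nat \<Rightarrow> bool) set \<Rightarrow> bool" where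
  "good_fs S \<longleftrightarrow> (\<forall>P Q. P \<in> S \<longrightarrow> Q \<in> S \<longrightarrow> (\<lambda>x. P x \<and> Q x) \<in> S)
     \<and> (\<forall>P Q. (\<forall>x. P x \<longrightarrow> Q x) \<longrightarrow> P \<in> S \<longrightarrow> Q \<in> S) \<and> (\<lambda>_. False) \<notin> S
      \<and> (\<forall>P. eventually P sequentially \<longrightarrow> P \<in> S)"

lemma good_fs_isf: "good_fs S \<Longrightarrow> is_filter (\<lambda>P. P \<in> S)"
  unfolding good_fs_def is_filter_def by auto

lemma exists_ultra_nat: "\<exists>U. ultra_nat U"
proof -
  define \<A> where "\<A> = {S. good_fs S}"
  have S0: "{P. eventually P sequentially} \<in> \<A>"
    unfolding \<A>_def good_fs_def
    by (auto elim: eventually_mono simp: eventually_conj)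
  have "\<exists>M\<in>\<A>. \<forall>X\<in>\<A>. M \<subseteq> X \<longrightarrow> X = M"
  proof (rule subset_Zorn_nonempty)
    show "\<A> \<noteq> {}" using S0 by auto
    fix C assume C: "C \<noteq> {}" "subset.chain \<A> C"
    have CA: "\<And>S. S \<in> C \<Longrightarrow> good_fs S" using C unfolding subset.chain_def \<A>_def by auto
    have cmp: "\<And>S T. S \<in> C \<Longrightarrow> T \<in> C \<Longrightarrow> S \<subseteq> T \<or> T \<subseteq> S"
      using C unfolding subset.chain_def by auto
    show "\<Union>C \<in> \<A>"
      unfolding \<A>_def good_fs_def mem_Collect_eq
    proof (intro conjI allI impI)
      show "(\<lambda>_. False) \<notin> \<Union>C" using CA unfolding good_fs_def by blast
      fix P Q assume "P \<in> \<Union>C" "Q \<in> \<Union>C"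
      then obtain S T where ST: "S \<in> C" "T \<in> C" "P \<in> S" "Q \<in> T" by auto
      from cmp[OF ST(1,2)] show "(\<lambda>x. P x \<and> Q x) \<in> \<Union>C"
      proof
        assume "S \<subseteq> T"
        then have "(\<lambda>x. P x \<and> Q x) \<in> T" using ST CA[of T] unfolding good_fs_def by blast
        then show ?thesis using ST by blast
      next
        assume "T \<subseteq> S"
        then have "(\<lambda>x. P x \<and> Q x) \<in> S" using ST CA[of S] unfolding good_fs_def by blast
        then show ?thesis using ST by blast
      qed
    next
      fix P Q assume PQ: "\<forall>x. P x \<longrightarrow> Q x" "P \<in> \<Union>C"
      then obtain S where "S \<in> C" "P \<in> S" by auto
      then have "Q \<in> S" using PQ(1) CA[of S] unfolding good_fs_def by blast
      then show "Q \<in> \<Union>C" using \<open>S \<in> C\<close> by blast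
    next
      fix P assume "eventually P sequentially"
      obtain S where "S \<in> C" using C by auto
      then have "P \<in> S" using CA[of S] \<open>eventually P sequentially\<close> unfolding good_fs_def by blast
      then show "P \<in> \<Union>C" using \<open>S \<in> C\<close> by blast
    qed
  qed
  then obtain S where S: "good_fs S" and max: "\<And>X. good_fs X \<Longrightarrow> S \<subseteq> X \<Longrightarrow> X = S"
    unfolding \<A>_def by auto
  have sC: "\<And>P Q. P \<in> S \<Longrightarrow> Q \<in> S \<Longrightarrow> (\<lambda>x. P x \<and> Q x) \<in> S"
    and sM: "\<And>P Q. (\<And>x. P x \<Longrightarrow> Q x) \<Longrightarrow> P \<in> S \<Longrightarrow> Q \<in> S"
    and sF: "(\<lambda>_. False) \<notin> S"
    and sS: "\<And>P. eventually P sequentially \<Longrightarrow> P \<in> S"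
    using S unfolding good_fs_def by blast+
  have sT: "(\<lambda>_. True) \<in> S" using sS by simp
  have isf: "is_filter (\<lambda>P. P \<in> S)" using S by (rule good_fs_isf)
  define U where "U = Abs_filter (\<lambda>P. P \<in> S)"
  have evU: "eventually P U \<longleftrightarrow> P \<in> S" for P
    unfolding U_def using eventually_Abs_filter[OF isf] by simp
  show ?thesis
  proof (intro exI[of _ U])
    show "ultra_nat U"
      unfolding ultra_nat_def
    proof (intro conjI allI)
      show "U \<noteq> bot" unfolding trivial_limit_def evU using sF .
      show "U \<le> sequentially" unfolding le_filter_def evU using sS by blast
      fix P
      show "eventually P U \<or> eventually (\<lambda>x. \<not> P x) U"
      proof (rule disjCI)
        assume nP: "\<not> eventually (\<lambda>x. \<not> P x) U"
        define S' where "S' = {Q. \<exists>R\<in>S. \<forall>x. R x \<and> P x \<longrightarrow> Q x}"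
        have "good_fs S'"
          unfolding good_fs_def
        proof (intro conjI allI impI)
          show "(\<lambda>_. False) \<notin> S'"
          proof
            assume "(\<lambda>_. False) \<in> S'"
            then obtain R where R: "R \<in> S" "\<forall>x. R x \<longrightarrow> \<not> P x" unfolding S'_def by auto
            have "(\<lambda>x. \<not> P x) \<in> S" by (rule sM[OF _ R(1)]) (use R(2) in blast)
            then show False using nP unfolding evU by blast
          qed
          fix Q1 Q2 assume "Q1 \<in> S'" "Q2 \<in> S'"
          then obtain R1 R2 where R: "R1 \<in> S" "R2 \<in> S" "\<forall>x. R1 x \<and> P x \<longrightarrow> Q1 x" "\<forall>x. R2 x \<and> P x \<longrightarrow> Q2 x"
            unfolding S'_def by auto
          have "(\<lambda>x. R1 x \<and> R2 x) \<in> S" using sC R(1,2) .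
          then show "(\<lambda>x. Q1 x \<and> Q2 x) \<in> S'" unfolding S'_def using R(3,4) by (intro CollectI bexI[of _ "\<lambda>x. R1 x \<and> R2 x"]) auto
        next
          fix Q1 Q2 assume "\<forall>x. Q1 x \<longrightarrow> Q2 x" "Q1 \<in> S'"
          then show "Q2 \<in> S'" unfolding S'_def by auto
        next
          fix Q assume "eventually Q sequentially"
          then have "Q \<in> S" using sS by auto
          then show "Q \<in> S'" unfolding S'_def by (intro CollectI bexI[of _ Q]) auto
        qed
        moreover have "S \<subseteq> S'"
        proof
          fix Q assume "Q \<in> S" then show "Q \<in> S'" unfolding S'_def by (intro CollectI bexI[of _ Q]) auto
        qed
        ultimately have "S' = S" by (rule max)
        moreover have "P \<in> S'" unfolding S'_def using sT by (intro CollectI bexI[of _ "\<lambda>_. True"]) auto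
        ultimately show "eventually P U" unfolding evU by simp
      qed
    qed
  qed
qed

lemma ultra_lim:
  fixes f :: "nat \<Rightarrow> real"
  assumes U: "ultra_nat U" and B: "\<And>k. \<bar>f k\<bar> \<le> B"
  shows "\<exists>L. (f \<longlongrightarrow> L) U"
proof -
  have cpt: "compact {-B..B}" by simp
  have nb: "filtermap f U \<noteq> bot" using U unfolding ultra_nat_def by (simp add: filtermap_bot_iff)
  have "f k \<in> {-B..B}" for k using B[of k] by (auto simp: abs_le_iff)
  then have ev: "eventually (\<lambda>x. x \<in> {-B..B}) (filtermap f U)"
    by (simp add: eventually_filtermap)
  obtain L where L: "inf (nhds L) (filtermap f U) \<noteq> bot"
    using cpt[unfolded compact_filter] nb ev by blast
  have "(f \<longlongrightarrow> L) U"
    unfolding tendsto_def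
  proof (intro allI impI)
    fix S :: "real set" assume S: "open S" "L \<in> S"
    show "eventually (\<lambda>k. f k \<in> S) U"
    proof (rule ccontr)
      assume "\<not> eventually (\<lambda>k. f k \<in> S) U"
      then have "eventually (\<lambda>k. f k \<notin> S) U" using U unfolding ultra_nat_def by blast
      then have e1: "eventually (\<lambda>y. y \<notin> S) (filtermap f U)" by (simp add: eventually_filtermap)
      have e2: "eventually (\<lambda>y. y \<in> S) (nhds L)" using S by (rule eventually_nhds_in_open)
      have "eventually (\<lambda>_. False) (inf (nhds L) (filtermap f U))"
        unfolding eventually_inf using e1 e2 by blast
      then show False using L by (simp add: trivial_limit_def)
    qed
  qed
  then show ?thesis ..
qed


definition lin_graph :: "('a::real_normed_vector \<times> real) set \<Rightarrow> bool" where
  "lin_graph G \<longleftrightarrow> (0,0) \<in> G \<and> (\<forall>a s b t. (a,s) \<in> G \<longrightarrow> (b,t) \<in> G \<longrightarrow> (a+b, s+t) \<in> G)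
     \<and> (\<forall>k a s. (a,s) \<in> G \<longrightarrow> (k *\<^sub>R a, k * s) \<in> G) \<and> (\<forall>a s. (a,s) \<in> G \<longrightarrow> s \<le> norm a)"

lemma lin_graph_fun:
  assumes "lin_graph G" "(a,s) \<in> G" "(a,t) \<in> G" shows "s = t"
proof -
  have "((-1) *\<^sub>R a, (-1) * t) \<in> G" using assms unfolding lin_graph_def by blast
  then have "(a + (-1) *\<^sub>R a, s + (-1) * t) \<in> G" using assms unfolding lin_graph_def by blast
  then have 1: "s - t \<le> 0" using assms(1) unfolding lin_graph_def by fastforce
  have "((-1) *\<^sub>R a, (-1) * s) \<in> G" using assms unfolding lin_graph_def by blast
  then have "(a + (-1) *\<^sub>R a, t + (-1) * s) \<in> G" using assms unfolding lin_graph_def by blast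
  then have 2: "t - s \<le> 0" using assms(1) unfolding lin_graph_def by fastforce
  from 1 2 show ?thesis by simp
qed

lemma norming_functional:
  fixes x0 :: "'a::real_normed_vector"
  shows "\<exists>f. bounded_linear f \<and> (\<forall>y. \<bar>f y\<bar> \<le> norm y) \<and> f x0 = norm x0"
proof -
  define \<A> where "\<A> = {G. lin_graph G \<and> (x0, norm x0) \<in> G}"
  define G0 where "G0 = (\<lambda>c. (c *\<^sub>R x0, c * norm x0)) ` UNIV"
  have "G0 \<in> \<A>"
    unfolding \<A>_def lin_graph_def mem_Collect_eq
  proof (intro conjI allI impI)
    show "(0,0) \<in> G0" unfolding G0_def by (rule image_eqI[of _ _ 0]) auto
    show "(x0, norm x0) \<in> G0" unfolding G0_def by (rule image_eqI[of _ _ 1]) auto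
    fix a s b t assume "(a,s) \<in> G0" "(b,t) \<in> G0"
    then obtain c d where "a = c *\<^sub>R x0" "s = c * norm x0" "b = d *\<^sub>R x0" "t = d * norm x0"
      unfolding G0_def by auto
    then show "(a+b, s+t) \<in> G0" unfolding G0_def
      by (intro image_eqI[of _ _ "c+d"]) (auto simp: scaleR_add_left distrib_right)
  next
    fix k a s assume "(a,s) \<in> G0"
    then obtain c where "a = c *\<^sub>R x0" "s = c * norm x0" unfolding G0_def by auto
    then show "(k *\<^sub>R a, k * s) \<in> G0" unfolding G0_def
      by (intro image_eqI[of _ _ "k*c"]) auto
  next
    fix a s assume "(a,s) \<in> G0"
    then obtain c where "a = c *\<^sub>R x0" "s = c * norm x0" unfolding G0_def by auto
    then show "s \<le> norm a" by (simp add: mult_right_mono)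
  qed
  have "\<exists>M\<in>\<A>. \<forall>X\<in>\<A>. M \<subseteq> X \<longrightarrow> X = M"
  proof (rule subset_Zorn_nonempty)
    show "\<A> \<noteq> {}" using \<open>G0 \<in> \<A>\<close> by auto
    fix C assume C: "C \<noteq> {}" "subset.chain \<A> C"
    have CA: "\<And>G. G \<in> C \<Longrightarrow> lin_graph G \<and> (x0, norm x0) \<in> G" using C unfolding subset.chain_def \<A>_def by auto
    have cmp: "\<And>S T. S \<in> C \<Longrightarrow> T \<in> C \<Longrightarrow> S \<subseteq> T \<or> T \<subseteq> S"
      using C unfolding subset.chain_def by auto
    obtain G1 where G1: "G1 \<in> C" using C by auto
    show "\<Union>C \<in> \<A>"
      unfolding \<A>_def lin_graph_def mem_Collect_eq
    proof (intro conjI allI impI)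
      show "(0,0) \<in> \<Union>C" using G1 CA[OF G1] unfolding lin_graph_def by blast
      show "(x0, norm x0) \<in> \<Union>C" using G1 CA[OF G1] by blast
      fix a s b t assume "(a,s) \<in> \<Union>C" "(b,t) \<in> \<Union>C"
      then obtain S T where ST: "S \<in> C" "T \<in> C" "(a,s) \<in> S" "(b,t) \<in> T" by auto
      from cmp[OF ST(1,2)] show "(a+b, s+t) \<in> \<Union>C"
      proof
        assume "S \<subseteq> T"
        then have "(a+b, s+t) \<in> T" using ST CA[of T] unfolding lin_graph_def by blast
        then show ?thesis using ST by blast
      next
        assume "T \<subseteq> S"
        then have "(a+b, s+t) \<in> S" using ST CA[of S] unfolding lin_graph_def by blast
        then show ?thesis using ST by blast
      qed
    next
      fix k a s assume "(a,s) \<in> \<Union>C"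
      then obtain S where "S \<in> C" "(a,s) \<in> S" by auto
      then have "(k *\<^sub>R a, k * s) \<in> S" using CA[of S] unfolding lin_graph_def by blast
      then show "(k *\<^sub>R a, k * s) \<in> \<Union>C" using \<open>S \<in> C\<close> by blast
    next
      fix a s assume "(a,s) \<in> \<Union>C"
      then obtain S where "S \<in> C" "(a,s) \<in> S" by auto
      then show "s \<le> norm a" using CA[of S] unfolding lin_graph_def by blast
    qed
  qed
  then obtain G where GA: "G \<in> \<A>" and max: "\<And>X. X \<in> \<A> \<Longrightarrow> G \<subseteq> X \<Longrightarrow> X = G" by blast
  have lg: "lin_graph G" and x0G: "(x0, norm x0) \<in> G" using GA unfolding \<A>_def by auto
  have g0: "(0,0) \<in> G"
    and gadd: "\<And>a s b t. (a,s) \<in> G \<Longrightarrow> (b,t) \<in> G \<Longrightarrow> (a+b, s+t) \<in> G"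
    and gsc: "\<And>k a s. (a,s) \<in> G \<Longrightarrow> (k *\<^sub>R a, k * s) \<in> G"
    and gdom: "\<And>a s. (a,s) \<in> G \<Longrightarrow> s \<le> norm a"
    using lg unfolding lin_graph_def by blast+
  have total: "\<exists>s. (a,s) \<in> G" for a
  proof (rule ccontr)
    assume ny: "\<nexists>s. (a,s) \<in> G"
    define y where "y = a"
    define V where "V = (\<lambda>(b,r). r - norm (b - y)) ` G"
    define c where "c = Sup V"
    have Vne: "V \<noteq> {}" using g0 unfolding V_def by auto
    have key: "r - norm (b - y) \<le> norm (e + y) - s" if "(b,r) \<in> G" "(e,s) \<in> G" for b r e s
    proof -
      have "r + s \<le> norm (b + e)" using gdom[OF gadd[OF that]] .
      also have "norm (b + e) \<le> norm (e + y) + norm (b - y)"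
        using norm_triangle_ineq[of "e + y" "b - y"] by (simp add: algebra_simps)
      finally show ?thesis by simp
    qed
    have bdd: "bdd_above V" unfolding V_def bdd_above_def
    proof (intro exI[of _ "norm (0 + y) - 0"] ballI)
      fix v assume "v \<in> (\<lambda>(b, r). r - norm (b - y)) ` G"
      then obtain b r where "(b,r) \<in> G" "v = r - norm (b - y)" by auto
      then show "v \<le> norm (0 + y) - 0" using key[OF _ g0] by simp
    qed
    have cup: "r - norm (b - y) \<le> c" if "(b,r) \<in> G" for b r
      unfolding c_def by (rule cSup_upper[OF _ bdd]) (use that in \<open>force simp: V_def\<close>)
    have clow: "c \<le> norm (e + y) - s" if "(e,s) \<in> G" for e s
      unfolding c_def
    proof (rule cSup_least[OF Vne])
      fix v assume "v \<in> V"
      then obtain b r where "(b,r) \<in> G" "v = r - norm (b - y)" unfolding V_def by auto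
      then show "v \<le> norm (e + y) - s" using key[OF _ that] by simp
    qed
    define G' where "G' = (\<lambda>((e,s),t). (e + t *\<^sub>R y, s + t * c)) ` (G \<times> UNIV)"
    have memG': "(e + t *\<^sub>R y, s + t * c) \<in> G'" if "(e,s) \<in> G" for e s t
      unfolding G'_def using that by (intro image_eqI[of _ _ "((e,s),t)"]) auto
    have G'D: "\<exists>e s t. (e,s) \<in> G \<and> p = (e + t *\<^sub>R y, s + t * c)" if "p \<in> G'" for p
      using that unfolding G'_def by auto
    have "G' \<in> \<A>"
      unfolding \<A>_def lin_graph_def mem_Collect_eq
    proof (intro conjI allI impI)
      show "(0,0) \<in> G'" using memG'[OF g0, of 0] by simp
      show "(x0, norm x0) \<in> G'" using memG'[OF x0G, of 0] by simp
      fix a1 s1 b1 t1 assume "(a1,s1) \<in> G'" "(b1,t1) \<in> G'"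
      then obtain e s t e' s' t' where E: "(e,s) \<in> G" "(e',s') \<in> G"
        "a1 = e + t *\<^sub>R y" "s1 = s + t*c" "b1 = e' + t' *\<^sub>R y" "t1 = s' + t'*c"
        using G'D by (metis prod.inject)
      show "(a1+b1, s1+t1) \<in> G'"
        using memG'[OF gadd[OF E(1,2)], of "t+t'"] E(3-6)
        by (simp add: algebra_simps)
    next
      fix k a1 s1 assume "(a1,s1) \<in> G'"
      then obtain e s t where E: "(e,s) \<in> G" "a1 = e + t *\<^sub>R y" "s1 = s + t*c"
        unfolding G'_def by auto
      show "(k *\<^sub>R a1, k * s1) \<in> G'"
        using memG'[OF gsc[OF E(1), of k], of "k*t"] E(2,3)
        by (simp add: algebra_simps)
    next
      fix a1 s1 assume "(a1,s1) \<in> G'"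
      then obtain e s t where E: "(e,s) \<in> G" "a1 = e + t *\<^sub>R y" "s1 = s + t*c"
        unfolding G'_def by auto
      consider "t = 0" | "t > 0" | "t < 0" by linarith
      then show "s1 \<le> norm a1"
      proof cases
        case 1 then show ?thesis using E gdom by simp
      next
        case 2
        have "c \<le> norm ((1/t) *\<^sub>R e + y) - (1/t) * s" using clow[OF gsc[OF E(1)]] .
        then have "t * c \<le> t * (norm ((1/t) *\<^sub>R e + y) - (1/t) * s)"
          using 2 by (simp add: mult_left_mono)
        moreover have "t * norm ((1/t) *\<^sub>R e + y) = norm (t *\<^sub>R ((1/t) *\<^sub>R e + y))"
          using 2 by simp
        moreover have "t *\<^sub>R ((1/t) *\<^sub>R e + y) = e + t *\<^sub>R y"
          using 2 by (simp add: scaleR_add_right)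
        ultimately have "t * c \<le> norm (e + t *\<^sub>R y) - s"
          using 2 by (simp add: right_diff_distrib)
        then show ?thesis using E by (simp add: algebra_simps)
      next
        case 3
        define \<tau> where "\<tau> = - t"
        have tp: "\<tau> > 0" using 3 by (simp add: \<tau>_def)
        have "(1/\<tau>) * s - norm ((1/\<tau>) *\<^sub>R e - y) \<le> c" using cup[OF gsc[OF E(1)]] .
        then have "\<tau> * ((1/\<tau>) * s - norm ((1/\<tau>) *\<^sub>R e - y)) \<le> \<tau> * c"
          using tp by (simp add: mult_left_mono)
        moreover have "\<tau> * norm ((1/\<tau>) *\<^sub>R e - y) = norm (\<tau> *\<^sub>R ((1/\<tau>) *\<^sub>R e - y))"
          using tp by simp
        moreover have "\<tau> *\<^sub>R ((1/\<tau>) *\<^sub>R e - y) = e + t *\<^sub>R y"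
          using tp by (simp add: scaleR_diff_right \<tau>_def)
        ultimately have "s - norm (e + t *\<^sub>R y) \<le> \<tau> * c"
          using tp by (simp add: right_diff_distrib)
        then show ?thesis using E by (simp add: \<tau>_def)
      qed
    qed
    moreover have "G \<subseteq> G'"
    proof
      fix p assume "p \<in> G"
      then show "p \<in> G'" using memG'[of "fst p" "snd p" 0] by simp
    qed
    ultimately have "G' = G" by (rule max)
    moreover have "(y, c) \<in> G'" using memG'[OF g0, of 1] by simp
    ultimately show False using ny y_def by auto
  qed
  define f where "f a = (THE s. (a,s) \<in> G)" for a
  have fG: "(a, f a) \<in> G" for a
    unfolding f_def using total[of a] lin_graph_fun[OF lg] by (metis theI)
  have feq: "(a,s) \<in> G \<Longrightarrow> f a = s" for a s using lin_graph_fun[OF lg fG] by blast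
  have fadd: "f (a + b) = f a + f b" for a b using feq[OF gadd[OF fG fG]] .
  have fsc: "f (k *\<^sub>R a) = k * f a" for k a using feq[OF gsc[OF fG]] .
  have fle: "f a \<le> norm a" for a using gdom[OF fG] .
  have fabs: "\<bar>f a\<bar> \<le> norm a" for a
    using fle[of a] fle[of "(-1) *\<^sub>R a"] fsc[of "-1" a] by auto
  have "bounded_linear f"
    by (rule bounded_linear_intro[of f 1]) (use fadd fsc fabs in auto)
  moreover have "f x0 = norm x0" using feq[OF x0G] .
  ultimately show ?thesis using fabs by blast
qed


lemma powr_convex0:
  fixes p q t u :: real
  assumes u: "u \<ge> 1" and p: "p \<ge> 0" and q: "q \<ge> 0" and t: "0 \<le> t" "t \<le> 1"
  shows "((1-t)*p + t*q) powr u \<le> (1-t) * p powr u + t * q powr u"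
proof -
  have tu: "s powr u \<le> s" if "0 \<le> s" "s \<le> 1" for s :: real
  proof -
    have "s powr u \<le> s powr 1" by (rule powr_mono'[OF u that])
    then show ?thesis using that by simp
  qed
  show ?thesis
  proof (cases "p = 0")
    case True
    have "(t*q) powr u = t powr u * q powr u" using t q by (simp add: powr_mult)
    also have "\<dots> \<le> t * q powr u" using tu[OF t] by (simp add: mult_right_mono)
    finally show ?thesis using True u by simp
  next
    case pF: False
    show ?thesis
    proof (cases "q = 0")
      case True
      have "((1-t)*p) powr u = (1-t) powr u * p powr u" using t p by (simp add: powr_mult)
      also have "\<dots> \<le> (1-t) * p powr u" using tu[of "1-t"] t by (simp add: mult_right_mono)
      finally show ?thesis using True u by simp
    next
      case False
      have "convex_on {0<..} (\<lambda>x::real. x powr u)" by (rule powr_convex[OF u])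
      from convex_onD[OF this t, of p q] show ?thesis using p q pF False by simp
    qed
  qed
qed

lemma regR_convex:
  fixes a b :: "'x::real_normed_vector"
  assumes u: "u \<ge> 1" and t: "0 \<le> t" "t \<le> 1"
  shows "regR u ((1-t) *\<^sub>R a + t *\<^sub>R b) \<le> (1-t) * regR u a + t * regR u b"
proof -
  have "norm ((1-t) *\<^sub>R a + t *\<^sub>R b) \<le> (1-t) * norm a + t * norm b"
    using norm_triangle_ineq[of "(1-t) *\<^sub>R a" "t *\<^sub>R b"] t by simp
  then have "norm ((1-t) *\<^sub>R a + t *\<^sub>R b) powr u \<le> ((1-t) * norm a + t * norm b) powr u"
    using u by (intro powr_mono2) auto
  also have "\<dots> \<le> (1-t) * norm a powr u + t * norm b powr u"
    by (rule powr_convex0[OF u _ _ t]) auto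
  finally have "norm ((1-t) *\<^sub>R a + t *\<^sub>R b) powr u / u \<le> ((1-t) * norm a powr u + t * norm b powr u) / u"
    using u by (intro divide_right_mono) auto
  then show ?thesis unfolding regR_def by (simp add: add_divide_distrib)
qed

lemma regR_nonneg: "u \<ge> 1 \<Longrightarrow> regR u x \<ge> 0"
  unfolding regR_def by simp

lemma le_by_small:
  fixes a b K :: real
  assumes K: "K \<ge> 0" and H: "\<And>t. 0 < t \<Longrightarrow> t \<le> 1 \<Longrightarrow> a \<le> b + t * K"
  shows "a \<le> b"
proof (rule field_le_epsilon)
  fix e :: real assume e: "0 < e"
  define t where "t = min 1 (e / (K+1))"
  have t0: "0 < t" "t \<le> 1" using e K by (auto simp: t_def)
  have "t * K \<le> (e / (K+1)) * K" by (rule mult_right_mono) (use K in \<open>auto simp: t_def\<close>)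
  also have "\<dots> \<le> e" using e K by (simp add: field_simps)
  finally show "a \<le> b + e" using H[OF t0] by simp
qed

lemma tik_VI:
  fixes j :: "'x::real_normed_vector \<Rightarrow> 'xa::real_normed_vector"
    and A :: "'xa \<Rightarrow> 'y::real_inner"
  assumes A: "bounded_linear A" and j: "bounded_linear j" and u: "u \<ge> 1" and al: "\<alpha> > 0"
    and xa: "xa \<in> tik_min A j u \<alpha> g"
  shows "regR u z \<ge> regR u xa + inner (g - A (j xa)) (A (j z) - A (j xa)) / \<alpha>"
proof -
  interpret A: bounded_linear A by fact
  interpret j: bounded_linear j by fact
  define r where "r = g - A (j xa)"
  define e where "e = A (j z) - A (j xa)"
  have main: "regR u xa + inner r e / \<alpha> \<le> regR u z + t * ((norm e)\<^sup>2 / (2*\<alpha>))"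
    if t: "0 < t" "t \<le> 1" for t
  proof -
    define zt where "zt = (1-t) *\<^sub>R xa + t *\<^sub>R z"
    have "j zt = (1-t) *\<^sub>R j xa + t *\<^sub>R j z" unfolding zt_def by (simp only: j.add j.scale)
    then have "A (j zt) = (1-t) *\<^sub>R A (j xa) + t *\<^sub>R A (j z)" by (simp only: A.add A.scale)
    then have Azt: "A (j zt) = A (j xa) + t *\<^sub>R e"
      unfolding e_def by (simp add: algebra_simps)
    have geq: "g - A (j zt) = r - t *\<^sub>R e" unfolding Azt r_def by simp
    have "(norm (r - t *\<^sub>R e))\<^sup>2 = (norm r)\<^sup>2 - 2 * t * inner r e + t\<^sup>2 * (norm e)\<^sup>2"
      unfolding power2_norm_eq_inner
      by (simp add: inner_diff_left inner_diff_right inner_commute power2_eq_square algebra_simps)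
    then have nz: "(norm (g - A (j zt)))\<^sup>2 = (norm r)\<^sup>2 - 2 * t * inner r e + t\<^sup>2 * (norm e)\<^sup>2"
      unfolding geq .
    have minz: "(norm r)\<^sup>2 / (2*\<alpha>) + regR u xa \<le> (norm (g - A (j zt)))\<^sup>2 / (2*\<alpha>) + regR u zt"
      using xa unfolding tik_min_def r_def by blast
    have cz: "regR u zt \<le> (1-t) * regR u xa + t * regR u z"
      unfolding zt_def by (rule regR_convex[OF u]) (use t in auto)
    have "(norm r)\<^sup>2 / (2*\<alpha>) + regR u xa \<le>
          ((norm r)\<^sup>2 - 2 * t * inner r e + t\<^sup>2 * (norm e)\<^sup>2) / (2*\<alpha>) + (1-t) * regR u xa + t * regR u z"
      using minz cz nz by simp
    then have "t * regR u xa + t * (inner r e / \<alpha>) \<le> t * regR u z + t * (t * ((norm e)\<^sup>2 / (2*\<alpha>)))"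
      using al by (simp add: field_simps power2_eq_square)
    then have "t * (regR u xa + inner r e / \<alpha>) \<le> t * (regR u z + t * ((norm e)\<^sup>2 / (2*\<alpha>)))"
      by (simp add: algebra_simps)
    then show ?thesis using t by simp
  qed
  have "regR u xa + inner r e / \<alpha> \<le> regR u z"
    by (rule le_by_small[OF _ main]) (use al in auto)
  then show ?thesis unfolding r_def e_def by simp
qed


lemma regR_norm_bound:
  assumes u: "u \<ge> 1" and R: "regR u z \<le> C"
  shows "norm z \<le> max 1 (u * C)"
proof (cases "norm z \<le> 1")
  case True then show ?thesis by simp
next
  case False
  have "norm z = norm z powr 1" using False by simp
  also have "\<dots> \<le> norm z powr u" by (rule powr_mono) (use u False in auto)
  also have "\<dots> \<le> u * C" using R u unfolding regR_def by (simp add: field_simps)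
  finally show ?thesis by simp
qed

lemma KC_refl:
  fixes j :: "'x::real_normed_vector \<Rightarrow> 'xa::real_normed_vector"
    and A :: "'xa \<Rightarrow> 'y::real_inner"
  assumes A: "bounded_linear A" and j: "bounded_linear j" and u: "u \<ge> 1"
    and U: "ultra_nat U" and refl: "reflexive_space TYPE('x)"
    and bnd: "\<And>k. regR u (z k) \<le> C"
  shows "\<exists>zs. (\<forall>v. ((\<lambda>k. inner v (A (j (z k)))) \<longlongrightarrow> inner v (A (j zs))) U)
           \<and> (\<forall>c. eventually (\<lambda>k. regR u (z k) \<le> c) U \<longrightarrow> regR u zs \<le> c)"
proof -
  define B where "B = max 1 (u * C)"
  have nB: "norm (z k) \<le> B" for k unfolding B_def by (rule regR_norm_bound[OF u bnd])
  have B0: "B \<ge> 0" unfolding B_def by simp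
  have Unb: "U \<noteq> bot" using U unfolding ultra_nat_def by auto
  have lim_ex: "\<exists>L. ((\<lambda>k. f (z k)) \<longlongrightarrow> L) U" if f: "bounded_linear f" for f :: "'x \<Rightarrow> real"
  proof (rule ultra_lim[OF U])
    fix k
    have "\<bar>f (z k)\<bar> \<le> onorm f * norm (z k)" using onorm[OF f] by simp
    also have "\<dots> \<le> onorm f * B" by (rule mult_left_mono[OF nB onorm_pos_le[OF f]])
    finally show "\<bar>f (z k)\<bar> \<le> onorm f * B" .
  qed
  define \<Phi> where "\<Phi> f = (if bounded_linear f then (THE L. ((\<lambda>k. f (z k)) \<longlongrightarrow> L) U) else 0)"
    for f :: "'x \<Rightarrow> real"
  have \<Phi>lim: "((\<lambda>k. f (z k)) \<longlongrightarrow> \<Phi> f) U" if f: "bounded_linear f" for f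
  proof -
    obtain L where L: "((\<lambda>k. f (z k)) \<longlongrightarrow> L) U" using lim_ex[OF f] by blast
    have "(THE L. ((\<lambda>k. f (z k)) \<longlongrightarrow> L) U) = L"
      by (rule the_equality[where P="\<lambda>L. ((\<lambda>k. f (z k)) \<longlongrightarrow> L) U", OF L])
         (rule tendsto_unique[OF Unb _ L])
    then show ?thesis using L f unfolding \<Phi>_def by simp
  qed
  have \<Phi>eq: "\<Phi> f = L" if f: "bounded_linear f" and L: "((\<lambda>k. f (z k)) \<longlongrightarrow> L) U" for f L
    using tendsto_unique[OF Unb \<Phi>lim[OF f] L] .
  have hyp: "(\<forall>f g. bounded_linear f \<longrightarrow> bounded_linear g \<longrightarrow> \<Phi> (\<lambda>x. f x + g x) = \<Phi> f + \<Phi> g) \<and>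
          (\<forall>c f. bounded_linear f \<longrightarrow> \<Phi> (\<lambda>x. c * f x) = c * \<Phi> f) \<and>
          (\<exists>C. \<forall>f. bounded_linear f \<longrightarrow> \<bar>\<Phi> f\<bar> \<le> C * onorm f)"
    proof (intro conjI allI impI exI[of _ B])
      fix f g :: "'x \<Rightarrow> real" assume f: "bounded_linear f" and g: "bounded_linear g"
      show "\<Phi> (\<lambda>x. f x + g x) = \<Phi> f + \<Phi> g"
        by (rule \<Phi>eq[OF bounded_linear_add[OF f g] tendsto_add[OF \<Phi>lim[OF f] \<Phi>lim[OF g]]])
    next
      fix c and f :: "'x \<Rightarrow> real" assume f: "bounded_linear f"
      show "\<Phi> (\<lambda>x. c * f x) = c * \<Phi> f"
        by (rule \<Phi>eq[OF bounded_linear_const_mult[OF f] tendsto_mult_left[OF \<Phi>lim[OF f]]])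
    next
      fix f :: "'x \<Rightarrow> real" assume f: "bounded_linear f"
      have "((\<lambda>k. \<bar>f (z k)\<bar>) \<longlongrightarrow> \<bar>\<Phi> f\<bar>) U" using \<Phi>lim[OF f] by (rule tendsto_rabs)
      moreover have "\<bar>f (z k)\<bar> \<le> B * onorm f" for k
      proof -
        have "\<bar>f (z k)\<bar> \<le> onorm f * norm (z k)" using onorm[OF f] by simp
        also have "\<dots> \<le> onorm f * B" by (rule mult_left_mono[OF nB onorm_pos_le[OF f]])
        finally show ?thesis by (simp add: mult.commute)
      qed
      ultimately show "\<bar>\<Phi> f\<bar> \<le> B * onorm f"
        using Unb by (intro tendsto_le[OF _ tendsto_const]) auto
    qed
  have "\<exists>x. \<forall>f. bounded_linear f \<longrightarrow> \<Phi> f = f x"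
    using refl[unfolded reflexive_space_def, THEN spec[of _ \<Phi>], THEN mp, OF hyp] .
  then obtain zs where zs: "\<And>f. bounded_linear f \<Longrightarrow> \<Phi> f = f zs" by blast
  show ?thesis
  proof (intro exI[of _ zs] conjI allI impI)
    fix v
    have bl: "bounded_linear (\<lambda>x. inner v (A (j x)))"
      using bounded_linear_compose[OF bounded_linear_inner_right[of v] bounded_linear_compose[OF A j]] by simp
    show "((\<lambda>k. inner v (A (j (z k)))) \<longlongrightarrow> inner v (A (j zs))) U"
      using \<Phi>lim[OF bl] zs[OF bl] by simp
  next
    fix c assume ev: "eventually (\<lambda>k. regR u (z k) \<le> c) U"
    obtain f where f: "bounded_linear f" "\<And>y. \<bar>f y\<bar> \<le> norm y" "f zs = norm zs"
      using norming_functional[of zs] by blast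
    obtain lN where lN: "((\<lambda>k. norm (z k)) \<longlongrightarrow> lN) U"
      using ultra_lim[OF U, of "\<lambda>k. norm (z k)" B] nB by auto
    have "norm zs \<le> lN"
    proof (rule tendsto_le[OF _ lN])
      show "((\<lambda>k. f (z k)) \<longlongrightarrow> norm zs) U" using \<Phi>lim[OF f(1)] zs[OF f(1)] f(3) by simp
      show "\<forall>\<^sub>F k in U. f (z k) \<le> norm (z k)" by (intro always_eventually allI) (use f(2) in \<open>simp add: abs_le_iff\<close>)
    qed (use Unb in auto)
    have lN0: "lN \<ge> 0" using \<open>norm zs \<le> lN\<close> norm_ge_zero[of zs] by linarith
    have "((\<lambda>k. norm (z k) powr u / u) \<longlongrightarrow> lN powr u / u) U"
      using u by (intro tendsto_divide tendsto_const tendsto_powr2[OF lN tendsto_const]) auto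
    then have "lN powr u / u \<le> c"
      using ev Unb unfolding regR_def by (intro tendsto_le[OF _ tendsto_const]) auto
    moreover have "norm zs powr u / u \<le> lN powr u / u"
      using u \<open>norm zs \<le> lN\<close> by (intro divide_right_mono powr_mono2) auto
    ultimately show "regR u zs \<le> c" unfolding regR_def by simp
  qed
qed


lemma KC_tau:
  fixes j :: "'x::real_normed_vector \<Rightarrow> 'xa::real_normed_vector"
    and A :: "'xa \<Rightarrow> 'y::real_inner"
  assumes u: "u \<ge> 1"
    and U: "ultra_nat U" and adm: "admissible_topology A j u \<tau>"
    and bnd: "\<And>k. regR u (z k) \<le> C"
  shows "\<exists>zs. (\<forall>v. ((\<lambda>k. inner v (A (j (z k)))) \<longlongrightarrow> inner v (A (j zs))) U)
           \<and> (\<forall>c. eventually (\<lambda>k. regR u (z k) \<le> c) U \<longrightarrow> regR u zs \<le> c)"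
proof -
  have top: "topspace \<tau> = UNIV" and haus: "Hausdorff_space \<tau>"
    and cpt: "\<And>c. compactin \<tau> {x. regR u x \<le> c}"
    and cont: "continuous_map \<tau> weak_top (\<lambda>x. A (j x))"
    using adm unfolding admissible_topology_def locally_convex_Hausdorff_def by blast+
  have Unb: "U \<noteq> bot" and ultra: "\<And>P. eventually P U \<or> eventually (\<lambda>x. \<not> P x) U"
    using U unfolding ultra_nat_def by auto
  define K where "K = {x::'x. regR u x \<le> C}"
  define cl where "cl P = \<tau> closure_of {z k | k. P k}" for P
  define \<U> where "\<U> = cl ` {P. eventually P U}"
  have fipQ: "\<exists>Q. eventually Q U \<and> (\<forall>T\<in>\<F>. {z k | k. Q k} \<subseteq> T)"
    if "finite \<F>" "\<F> \<subseteq> \<U>" for \<F>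
    using that
  proof (induction \<F> rule: finite_induct)
    case empty then show ?case by (intro exI[of _ "\<lambda>_. True"]) auto
  next
    case (insert T \<F>)
    then obtain Q where Q: "eventually Q U" "\<forall>T\<in>\<F>. {z k | k. Q k} \<subseteq> T" by auto
    from insert have "T \<in> \<U>" by auto
    then obtain P where P: "eventually P U" "T = cl P" unfolding \<U>_def by auto
    have "{z k | k. P k} \<subseteq> T" unfolding P(2) cl_def by (rule closure_of_subset) (simp add: top)
    moreover have "{z k | k. Q k \<and> P k} \<subseteq> {z k | k. P k}" by auto
    moreover have "{z k | k. Q k \<and> P k} \<subseteq> {z k | k. Q k}" by auto
    ultimately have "\<forall>T'\<in>insert T \<F>. {z k | k. Q k \<and> P k} \<subseteq> T'"
    proof (intro ballI)
      fix T' assume h: "{z k | k. P k} \<subseteq> T" "{z k | k. Q k \<and> P k} \<subseteq> {z k | k. P k}"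
        "{z k | k. Q k \<and> P k} \<subseteq> {z k | k. Q k}" "T' \<in> insert T \<F>"
      show "{z k | k. Q k \<and> P k} \<subseteq> T'"
      proof (cases "T' = T")
        case True then show ?thesis using h(1,2) by (rule_tac order_trans) auto
      next
        case False then have "T' \<in> \<F>" using h(4) by simp
        then have "{z k | k. Q k} \<subseteq> T'" using Q(2) by simp
        then show ?thesis using h(3) by (rule_tac order_trans) auto
      qed
    qed
    moreover have "eventually (\<lambda>k. Q k \<and> P k) U" using Q(1) P(1) by (rule eventually_conj)
    ultimately show ?case by (intro exI[of _ "\<lambda>k. Q k \<and> P k"] conjI)
  qed
  have clo: "\<forall>T\<in>\<U>. closedin \<tau> T" unfolding \<U>_def cl_def by auto
  have fip: "\<forall>\<F>. finite \<F> \<and> \<F> \<subseteq> \<U> \<longrightarrow> K \<inter> \<Inter>\<F> \<noteq> {}"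
  proof (intro allI impI)
    fix \<F> assume F: "finite \<F> \<and> \<F> \<subseteq> \<U>"
    obtain Q where Q: "eventually Q U" "\<forall>T\<in>\<F>. {z k | k. Q k} \<subseteq> T"
      using fipQ[OF conjunct1[OF F] conjunct2[OF F]] by (elim exE conjE)
    obtain k where "Q k" using eventually_happens'[OF Unb Q(1)] by (elim exE)
    have zk: "z k \<in> {z k | k. Q k}" using \<open>Q k\<close> by auto
    have "z k \<in> \<Inter>\<F>"
    proof (rule InterI)
      fix T assume "T \<in> \<F>"
      then have "{z k | k. Q k} \<subseteq> T" using Q(2) by (rule_tac bspec)
      then show "z k \<in> T" using zk by (rule subsetD)
    qed
    moreover have "z k \<in> K" using bnd unfolding K_def by simp
    ultimately have "z k \<in> K \<inter> \<Inter>\<F>" by (rule IntI[rotated])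
    then show "K \<inter> \<Inter>\<F> \<noteq> {}" by (metis empty_iff)
  qed
  have "\<forall>\<U>'. (\<forall>T\<in>\<U>'. closedin \<tau> T) \<and> (\<forall>\<F>. finite \<F> \<and> \<F> \<subseteq> \<U>' \<longrightarrow> K \<inter> \<Inter>\<F> \<noteq> {})
          \<longrightarrow> K \<inter> \<Inter>\<U>' \<noteq> {}"
    using cpt[of C, folded K_def, unfolded compactin_fip] by (rule conjunct2)
  then have "K \<inter> \<Inter>\<U> \<noteq> {}" using clo fip by (rule_tac mp[OF spec[of _ \<U>]]) simp
  then obtain zs where zs: "zs \<in> K" "zs \<in> \<Inter>\<U>" by blast
  have conv: "eventually (\<lambda>k. z k \<in> N) U" if N: "openin \<tau> N" "zs \<in> N" for N
  proof (rule ccontr)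
    assume "\<not> eventually (\<lambda>k. z k \<in> N) U"
    then have ev: "eventually (\<lambda>k. z k \<notin> N) U" using ultra by blast
    then have "cl (\<lambda>k. z k \<notin> N) \<in> \<U>" unfolding \<U>_def by (intro imageI) simp
    then have "zs \<in> cl (\<lambda>k. z k \<notin> N)" using zs(2) by (rule InterD[rotated])
    moreover have "cl (\<lambda>k. z k \<notin> N) \<subseteq> topspace \<tau> - N"
      unfolding cl_def
    proof (rule closure_of_minimal)
      show "closedin \<tau> (topspace \<tau> - N)" using N(1) by (rule closedin_diff[OF closedin_topspace])
      show "{z k |k. z k \<notin> N} \<subseteq> topspace \<tau> - N" using top by auto
    qed
    ultimately show False using N(2) by blast
  qed
  show ?thesis
  proof (intro exI[of _ zs] conjI allI impI)
    fix v :: 'y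
    show "((\<lambda>k. inner v (A (j (z k)))) \<longlongrightarrow> inner v (A (j zs))) U"
      unfolding tendsto_def
    proof (intro allI impI)
      fix S :: "real set" assume S: "open S" "inner v (A (j zs)) \<in> S"
      define W where "W = (\<lambda>y. inner y v) -` S"
      have "W \<in> {(\<lambda>y. inner y v) -` U | v U. open U}" unfolding W_def using S(1) by blast
      then have "openin weak_top W" unfolding weak_top_def by (rule topology_generated_by_Basis)
      then have "openin \<tau> {x \<in> topspace \<tau>. A (j x) \<in> W}"
        by (rule openin_continuous_map_preimage[OF cont])
      moreover have "zs \<in> {x \<in> topspace \<tau>. A (j x) \<in> W}"
        using S(2) top unfolding W_def by (simp add: inner_commute)
      ultimately have "eventually (\<lambda>k. z k \<in> {x \<in> topspace \<tau>. A (j x) \<in> W}) U" by (rule conv)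
      then show "eventually (\<lambda>k. inner v (A (j (z k))) \<in> S) U"
        by (rule eventually_mono) (simp add: W_def inner_commute)
    qed
  next
    fix c assume ev: "eventually (\<lambda>k. regR u (z k) \<le> c) U"
    show "regR u zs \<le> c"
    proof (rule ccontr)
      assume nz: "\<not> regR u zs \<le> c"
      have "closedin \<tau> {x. regR u x \<le> c}" by (rule compactin_imp_closedin[OF haus cpt])
      then have "openin \<tau> (topspace \<tau> - {x. regR u x \<le> c})" by auto
      moreover have "zs \<in> topspace \<tau> - {x. regR u x \<le> c}" using nz top by auto
      ultimately have "eventually (\<lambda>k. z k \<in> topspace \<tau> - {x. regR u x \<le> c}) U" by (rule conv)
      then have "eventually (\<lambda>k. False) U" using ev by eventually_elim auto
      then show False using Unb by simp
    qed
  qed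
qed


lemma KC:
  fixes j :: "'x::real_normed_vector \<Rightarrow> 'xa::real_normed_vector"
    and A :: "'xa \<Rightarrow> 'y::real_inner"
  assumes A: "bounded_linear A" and j: "bounded_linear j" and u: "u \<ge> 1"
    and U: "ultra_nat U"
    and exist: "reflexive_space TYPE('x) \<or> (\<exists>\<tau>. admissible_topology A j u \<tau>)"
    and bnd: "\<And>k. regR u (z k) \<le> C"
  shows "\<exists>zs. (\<forall>v. ((\<lambda>k. inner v (A (j (z k)))) \<longlongrightarrow> inner v (A (j zs))) U)
           \<and> (\<forall>c. eventually (\<lambda>k. regR u (z k) \<le> c) U \<longrightarrow> regR u zs \<le> c)"
  using exist
proof
  assume "reflexive_space TYPE('x)"
  then show ?thesis by (rule KC_refl[OF A j u U _ bnd])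
next
  assume "\<exists>\<tau>. admissible_topology A j u \<tau>"
  then obtain \<tau> where "admissible_topology A j u \<tau>" by blast
  then show ?thesis by (rule KC_tau[OF u U _ bnd])
qed

lemma tik_exists:
  fixes j :: "'x::real_normed_vector \<Rightarrow> 'xa::real_normed_vector"
    and A :: "'xa \<Rightarrow> 'y::real_inner"
  assumes A: "bounded_linear A" and j: "bounded_linear j" and u: "u \<ge> 1" and al: "\<alpha> > 0"
    and exist: "reflexive_space TYPE('x) \<or> (\<exists>\<tau>. admissible_topology A j u \<tau>)"
  shows "\<exists>xa. xa \<in> tik_min A j u \<alpha> g"
proof -
  define F where "F z = (norm (g - A (j z)))\<^sup>2 / (2 * \<alpha>) + regR u z" for z
  have F0: "F z \<ge> 0" for z
    unfolding F_def using al regR_nonneg[OF u, of z] by (intro add_nonneg_nonneg divide_nonneg_pos) auto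
  define m where "m = Inf (range F)"
  have bdd: "bdd_below (range F)" by (rule bdd_belowI[of _ 0]) (use F0 in auto)
  have mle: "m \<le> F z" for z unfolding m_def by (rule cInf_lower[OF _ bdd]) simp
  have m0: "m \<ge> 0" unfolding m_def by (rule cInf_greatest) (use F0 in auto)
  have "\<exists>z. F z < m + 1 / (Suc k)" for k
  proof -
    have "Inf (range F) < m + 1 / Suc k" unfolding m_def by simp
    then show ?thesis using cInf_less_iff[OF _ bdd] by auto
  qed
  then obtain z where z: "\<And>k. F (z k) < m + 1 / Suc k" by metis
  have zb: "F (z k) \<le> m + 1" for k
  proof -
    have "1 / real (Suc k) \<le> 1" by simp
    then show ?thesis using z[of k] by linarith
  qed
  have Fz: "(\<lambda>k. F (z k)) \<longlonglongrightarrow> m"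
  proof (rule tendsto_sandwich[of "\<lambda>_. m" _ _ "\<lambda>k. m + 1 / Suc k"])
    show "\<forall>\<^sub>F n in sequentially. m \<le> F (z n)" using mle by simp
    show "\<forall>\<^sub>F n in sequentially. F (z n) \<le> m + 1 / real (Suc n)" using z by (simp add: less_imp_le)
    show "(\<lambda>n. m + 1 / real (Suc n)) \<longlonglongrightarrow> m"
      using tendsto_add[OF tendsto_const[of m] LIMSEQ_inverse_real_of_nat] by (simp add: inverse_eq_divide)
  qed simp
  obtain U where U: "ultra_nat U" using exists_ultra_nat by blast
  have Unb: "U \<noteq> bot" and Useq: "U \<le> sequentially" using U unfolding ultra_nat_def by auto
  have Rb: "regR u (z k) \<le> m + 1" for k
    using zb[of k] al unfolding F_def by (smt (verit) divide_nonneg_pos zero_le_power2)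
  obtain zs where zs1: "\<And>v. ((\<lambda>k. inner v (A (j (z k)))) \<longlongrightarrow> inner v (A (j zs))) U"
    and zs2: "\<And>c. eventually (\<lambda>k. regR u (z k) \<le> c) U \<Longrightarrow> regR u zs \<le> c"
    using KC[OF A j u U exist, where z=z and C="m+1", OF Rb] by blast
  define a where "a k = norm (g - A (j (z k)))" for k
  have ab: "\<bar>a k\<bar> \<le> sqrt (2 * \<alpha> * (m + 1))" for k
  proof -
    have "(a k)\<^sup>2 / (2*\<alpha>) \<le> m + 1" using zb[of k] regR_nonneg[OF u, of "z k"] unfolding F_def a_def by linarith
    then have "(a k)\<^sup>2 \<le> 2 * \<alpha> * (m + 1)" using al by (simp add: field_simps)
    then show ?thesis using real_le_rsqrt[of "\<bar>a k\<bar>"] by simp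
  qed
  obtain aL where aL: "(a \<longlongrightarrow> aL) U" using ultra_lim[OF U, where f=a, OF ab] by blast
  have rb: "\<bar>regR u (z k)\<bar> \<le> m + 1" for k using Rb[of k] regR_nonneg[OF u, of "z k"] by simp
  obtain bL where bL: "((\<lambda>k. regR u (z k)) \<longlongrightarrow> bL) U" using ultra_lim[OF U, where f="\<lambda>k. regR u (z k)", OF rb] by blast
  have a0: "aL \<ge> 0"
    by (rule tendsto_lowerbound[OF aL always_eventually Unb]) (simp add: a_def)
  have Fza: "(\<lambda>k. F (z k)) = (\<lambda>k. (a k)\<^sup>2 / (2*\<alpha>) + regR u (z k))"
    unfolding F_def a_def ..
  have "((\<lambda>k. F (z k)) \<longlongrightarrow> aL\<^sup>2 / (2*\<alpha>) + bL) U"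
    unfolding Fza by (rule tendsto_add[OF tendsto_divide[OF tendsto_power[OF aL] tendsto_const] bL]) (use al in simp)
  moreover have "((\<lambda>k. F (z k)) \<longlongrightarrow> m) U" using Fz Useq by (rule tendsto_mono[rotated])
  ultimately have meq: "m = aL\<^sup>2 / (2*\<alpha>) + bL" using tendsto_unique[OF Unb] by blast
  define d where "d = g - A (j zs)"
  have "((\<lambda>k. inner d (g - A (j (z k)))) \<longlongrightarrow> inner d g - inner d (A (j zs))) U"
    unfolding inner_diff_right by (intro tendsto_diff tendsto_const zs1)
  then have lim1: "((\<lambda>k. inner d (g - A (j (z k)))) \<longlongrightarrow> (norm d)\<^sup>2) U"
    by (simp add: d_def power2_norm_eq_inner inner_diff_right[symmetric])
  have lim2: "((\<lambda>k. norm d * a k) \<longlongrightarrow> norm d * aL) U" by (intro tendsto_intros aL)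
  have cs: "inner d (g - A (j (z k))) \<le> norm d * a k" for k
    unfolding a_def by (rule order_trans[OF abs_ge_self Cauchy_Schwarz_ineq2])
  have "(norm d)\<^sup>2 \<le> norm d * aL"
    by (rule tendsto_le[OF _ lim2 lim1]) (use Unb cs in \<open>auto intro: always_eventually\<close>)
  then have dle: "norm d \<le> aL" using a0
    by (cases "norm d = 0") (auto simp: power2_eq_square)
  have Rle: "regR u zs \<le> bL"
  proof (rule field_le_epsilon)
    fix e :: real assume "0 < e"
    have "bL < bL + e" using \<open>0 < e\<close> by simp
    then have "eventually (\<lambda>k. regR u (z k) < bL + e) U"
      by (rule order_tendstoD(2)[OF bL])
    then have "eventually (\<lambda>k. regR u (z k) \<le> bL + e) U" by (rule eventually_mono) simp
    then show "regR u zs \<le> bL + e" by (rule zs2)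
  qed
  have "F zs \<le> m"
  proof -
    have "(norm d)\<^sup>2 \<le> aL\<^sup>2" using dle by (simp add: power_mono)
    then have "(norm d)\<^sup>2 / (2*\<alpha>) \<le> aL\<^sup>2 / (2*\<alpha>)" using al by (simp add: divide_right_mono)
    then show ?thesis unfolding F_def meq using Rle by (simp add: d_def)
  qed
  then have "zs \<in> tik_min A j u \<alpha> g"
    unfolding tik_min_def using mle unfolding F_def by (auto intro: order_trans)
  then show ?thesis ..
qed


lemma bound_xi:
  fixes j :: "'x::real_normed_vector \<Rightarrow> 'xa::real_normed_vector"
    and A :: "'xa \<Rightarrow> 'y::real_inner"
  assumes A: "bounded_linear A" and j: "bounded_linear j" and u: "u \<ge> 1" and M: "M > 0"
    and Alow: "\<And>y. norm y / M \<le> norm (A y)"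
    and al: "\<alpha> > 0" and xa: "xa \<in> tik_min A j u \<alpha> (A (j x))"
    and xi: "bounded_linear \<xi>" and sub: "(\<xi> \<circ> j) \<in> subdiff_R u x"
  shows "norm (A (j x) - A (j xa)) / \<alpha> \<le> M * onorm \<xi>"
proof -
  interpret A: bounded_linear A by fact
  interpret j: bounded_linear j by fact
  interpret xi: bounded_linear \<xi> by fact
  define d where "d = A (j x) - A (j xa)"
  have Ad: "A (j (x - xa)) = d" unfolding d_def by (simp add: j.diff A.diff)
  have vi: "regR u x \<ge> regR u xa + inner d d / \<alpha>"
    using tik_VI[OF A j u al xa, of x] unfolding d_def by simp
  have sg: "regR u xa \<ge> regR u x + \<xi> (j (xa - x))" using sub unfolding subdiff_R_def by auto
  have neg: "\<xi> (j (xa - x)) = - \<xi> (j (x - xa))"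
    by (metis minus_diff_eq j.neg xi.neg)
  have "inner d d / \<alpha> \<le> \<xi> (j (x - xa))" using vi sg neg by linarith
  also have "\<dots> \<le> onorm \<xi> * norm (j (x - xa))" using onorm[OF xi, of "j (x - xa)"] by simp
  also have "norm (j (x - xa)) \<le> M * norm d"
    using Alow[of "j (x - xa)"] M unfolding Ad by (simp add: pos_divide_le_eq mult.commute)
  then have "onorm \<xi> * norm (j (x - xa)) \<le> onorm \<xi> * (M * norm d)"
    by (rule mult_left_mono) (rule onorm_pos_le[OF xi])
  finally have main: "(norm d)\<^sup>2 / \<alpha> \<le> (M * onorm \<xi>) * norm d"
    by (simp add: power2_norm_eq_inner algebra_simps)
  show ?thesis
  proof (cases "norm d = 0")
    case True then show ?thesis unfolding d_def using M onorm_pos_le[OF xi] by simp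
  next
    case False
    then have nd: "norm d > 0" by simp
    have e: "norm d * (norm d / \<alpha>) = (norm d)\<^sup>2 / \<alpha>" by (simp add: power2_eq_square)
    have "norm d * (norm d / \<alpha>) \<le> norm d * (M * onorm \<xi>)"
      unfolding e using main by (simp only: mult.commute)
    then have "norm d / \<alpha> \<le> M * onorm \<xi>" by (rule mult_left_le_imp_le) (rule nd)
    then show ?thesis unfolding d_def .
  qed
qed

lemma w_mono:
  fixes j :: "'x::real_normed_vector \<Rightarrow> 'xa::real_normed_vector"
    and A :: "'xa \<Rightarrow> 'y::real_inner"
  assumes A: "bounded_linear A" and j: "bounded_linear j" and u: "u \<ge> 1"
    and a: "a > 0" and b: "b > 0" and ab: "a \<le> b"
    and xa: "xa \<in> tik_min A j u a (A (j x))" and xb: "xb \<in> tik_min A j u b (A (j x))"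
  shows "norm ((1/b) *\<^sub>R (A (j x) - A (j xb))) \<le> norm ((1/a) *\<^sub>R (A (j x) - A (j xa)))
    \<and> (norm ((1/a) *\<^sub>R (A (j x) - A (j xa)) - (1/b) *\<^sub>R (A (j x) - A (j xb))))\<^sup>2
        \<le> (norm ((1/a) *\<^sub>R (A (j x) - A (j xa))))\<^sup>2 - (norm ((1/b) *\<^sub>R (A (j x) - A (j xb))))\<^sup>2"
proof -
  define wa where "wa = (1/a) *\<^sub>R (A (j x) - A (j xa))"
  define wb where "wb = (1/b) *\<^sub>R (A (j x) - A (j xb))"
  have Axa: "A (j xa) = A (j x) - a *\<^sub>R wa" unfolding wa_def using a by simp
  have Axb: "A (j xb) = A (j x) - b *\<^sub>R wb" unfolding wb_def using b by simp
  have ia: "inner wa v = inner (A (j x) - A (j xa)) v / a" for v unfolding wa_def by simp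
  have ib: "inner wb v = inner (A (j x) - A (j xb)) v / b" for v unfolding wb_def by simp
  have v1: "regR u xb \<ge> regR u xa + inner wa (A (j xb) - A (j xa))"
    unfolding ia using tik_VI[OF A j u a xa, of xb] .
  have v2: "regR u xa \<ge> regR u xb + inner wb (A (j xa) - A (j xb))"
    unfolding ib using tik_VI[OF A j u b xb, of xa] .
  have s: "inner wa (A (j xb) - A (j xa)) + inner wb (A (j xa) - A (j xb)) \<le> 0" using v1 v2 by linarith
  have e1: "A (j xb) - A (j xa) = a *\<^sub>R wa - b *\<^sub>R wb" unfolding Axa Axb by simp
  have e2: "A (j xa) - A (j xb) = b *\<^sub>R wb - a *\<^sub>R wa" unfolding Axa Axb by simp
  have "inner wa (A (j xb) - A (j xa)) + inner wb (A (j xa) - A (j xb))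
      = a * inner wa wa - (a+b) * inner wa wb + b * inner wb wb"
    unfolding e1 e2 inner_diff_right inner_scaleR_right inner_commute[of wb wa] by (simp add: algebra_simps)
  then have h: "a * inner wa wa - (a+b) * inner wa wb + b * inner wb wb \<le> 0" using s by linarith
  define p where "p = inner wa wa"
  define q where "q = inner wb wb"
  define c where "c = inner wa wb"
  define D where "D = (norm (wa - wb))\<^sup>2"
  have Dq: "D = p + q - 2 * c" unfolding D_def p_def q_def c_def power2_norm_eq_inner
      inner_diff_left inner_diff_right inner_commute[of wb wa] by simp
  have D0: "D \<ge> 0" unfolding D_def by simp
  have h': "a * p - (a+b) * c + b * q \<le> 0" using h unfolding p_def q_def c_def .
  have key: "(a+b) * D \<le> (b-a) * (p-q)"
  proof -
    have "(a+b) * D = (a+b)*p + (a+b)*q - 2*((a+b)*c)" unfolding Dq by (simp add: algebra_simps)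
    moreover have "(b-a) * (p-q) = (a+b)*p + (a+b)*q - 2*(a*p) - 2*(b*q)" by (simp add: algebra_simps)
    ultimately show ?thesis using h' by linarith
  qed
  have pq: "q \<le> p \<and> D \<le> p - q"
  proof (cases "a = b")
    case True
    then have "(a+b) * D \<le> 0" using key by simp
    then have "D \<le> 0" using a b by (simp add: mult_le_0_iff)
    then have "D = 0" using D0 by simp
    then have "wa = wb" unfolding D_def by simp
    then show ?thesis using \<open>D = 0\<close> unfolding p_def q_def by simp
  next
    case False
    then have ba: "b - a > 0" using ab by simp
    have "0 \<le> (a+b) * D" using D0 a b by simp
    then have "0 \<le> (b-a) * (p-q)" using key by linarith
    then have qp: "q \<le> p" using ba by (simp add: zero_le_mult_iff)
    have "(b-a) * (p-q) \<le> (a+b) * (p-q)" using qp a by (intro mult_right_mono) auto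
    then have "(a+b) * D \<le> (a+b) * (p-q)" using key by linarith
    then have "D \<le> p - q" using a b by simp
    then show ?thesis using qp by simp
  qed
  have pa: "(norm wa)\<^sup>2 = p" and qb: "(norm wb)\<^sup>2 = q" unfolding p_def q_def power2_norm_eq_inner by simp_all
  have "(norm wb)\<^sup>2 \<le> (norm wa)\<^sup>2" unfolding pa qb using pq by simp
  then have "norm wb \<le> norm wa" by (rule power2_le_imp_le) simp
  moreover have "(norm (wa - wb))\<^sup>2 \<le> (norm wa)\<^sup>2 - (norm wb)\<^sup>2"
    unfolding pa qb D_def[symmetric] using pq by simp
  ultimately show ?thesis unfolding wa_def wb_def by simp
qed


lemma construct_xi:
  fixes j :: "'x::real_normed_vector \<Rightarrow> 'xa::real_normed_vector"
    and A :: "'xa \<Rightarrow> 'y::{real_inner, complete_space}"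
  assumes A: "bounded_linear A" and j: "bounded_linear j" and u: "u \<ge> 1" and M: "M > 0"
    and Alow: "\<And>y. norm y / M \<le> norm (A y)" and Aup: "\<And>y. norm (A y) \<le> M * norm y"
    and jinj: "inj j"
    and exist: "reflexive_space TYPE('x) \<or> (\<exists>\<tau>. admissible_topology A j u \<tau>)"
    and rb: "\<And>\<alpha> xa. \<alpha> > 0 \<Longrightarrow> xa \<in> tik_min A j u \<alpha> (A (j x)) \<Longrightarrow> norm (A (j x) - A (j xa)) / \<alpha> \<le> r"
  shows "\<exists>\<xi>. bounded_linear \<xi> \<and> (\<xi> \<circ> j) \<in> subdiff_R u x \<and> onorm \<xi> \<le> M * r"
proof -
  interpret A: bounded_linear A by fact
  interpret j: bounded_linear j by fact
  define al where "al n = 1 / real (Suc n)" for n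
  have alp: "al n > 0" for n unfolding al_def by simp
  have almono: "n \<le> m \<Longrightarrow> al m \<le> al n" for n m unfolding al_def by (simp add: frac_le)
  have "\<exists>xa. xa \<in> tik_min A j u (al n) (A (j x))" for n by (rule tik_exists[OF A j u alp exist])
  then obtain xs where xs: "\<And>n. xs n \<in> tik_min A j u (al n) (A (j x))" by metis
  define w where "w n = (1 / al n) *\<^sub>R (A (j x) - A (j (xs n)))" for n
  have wr: "norm (w n) \<le> r" for n
    using rb[OF alp xs] alp[of n] unfolding w_def by (simp add: divide_inverse mult.commute)
  have r0: "r \<ge> 0" using wr[of 0] norm_ge_zero[of "w 0"] by linarith
  have wm: "norm (w n) \<le> norm (w m) \<and> (norm (w m - w n))\<^sup>2 \<le> (norm (w m))\<^sup>2 - (norm (w n))\<^sup>2"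
    if "n \<le> m" for n m
    using w_mono[OF A j u alp alp almono[OF that] xs xs] unfolding w_def .
  define p where "p n = (norm (w n))\<^sup>2" for n
  have pinc: "incseq p" unfolding incseq_def p_def
    using wm by (auto intro: power_mono)
  have pb: "p n \<le> r\<^sup>2" for n unfolding p_def using wr[of n] by (intro power_mono) auto
  obtain pL where pL: "p \<longlonglongrightarrow> pL" using incseq_convergent[OF pinc] pb by blast
  have pC: "Cauchy p" using pL by (intro convergent_Cauchy convergentI)
  have "Cauchy w"
  proof (rule metric_CauchyI)
    fix e :: real assume e: "0 < e"
    then have "e\<^sup>2 > 0" by simp
    then obtain N where N: "\<And>m n. m \<ge> N \<Longrightarrow> n \<ge> N \<Longrightarrow> dist (p m) (p n) < e\<^sup>2"
      using metric_CauchyD[OF pC] by blast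
    have d: "dist (w m) (w n) < e" if "m \<ge> N" "n \<ge> N" "n \<le> m" for m n
    proof -
      have "(norm (w m - w n))\<^sup>2 \<le> p m - p n" using wm[OF that(3)] unfolding p_def by simp
      also have "\<dots> < e\<^sup>2" using N[OF that(1,2)] by (simp add: dist_real_def)
      finally have "(norm (w m - w n))\<^sup>2 < e\<^sup>2" .
      then have "norm (w m - w n) < e" by (rule power_less_imp_less_base) (use e in simp)
      then show ?thesis by (simp add: dist_norm)
    qed
    show "\<exists>N. \<forall>m\<ge>N. \<forall>n\<ge>N. dist (w m) (w n) < e"
    proof (intro exI[of _ N] allI impI)
      fix m n assume mn: "m \<ge> N" "n \<ge> N"
      show "dist (w m) (w n) < e"
      proof (cases "n \<le> m")
        case True then show ?thesis using d mn by blast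
      next
        case False then have "m \<le> n" by simp
        then have "dist (w n) (w m) < e" using d mn by blast
        then show ?thesis by (simp add: dist_commute)
      qed
    qed
  qed
  then obtain wL where wL: "w \<longlonglongrightarrow> wL" unfolding Cauchy_convergent_iff convergent_def by blast
  have wLr: "norm wL \<le> r"
    by (rule tendsto_le[OF _ tendsto_const tendsto_norm[OF wL]]) (use wr in auto)
  have alz: "al \<longlonglongrightarrow> 0"
    using LIMSEQ_inverse_real_of_nat unfolding al_def by (simp add: inverse_eq_divide)
  have Axs: "A (j (xs n)) = A (j x) - al n *\<^sub>R w n" for n
    unfolding w_def using alp[of n] by simp
  have Axs_lim: "(\<lambda>n. A (j (xs n))) \<longlonglongrightarrow> A (j x)"
  proof -
    have "(\<lambda>n. A (j x) - al n *\<^sub>R w n) \<longlonglongrightarrow> A (j x) - 0 *\<^sub>R wL"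
      by (intro tendsto_diff tendsto_const tendsto_scaleR alz wL)
    then show ?thesis unfolding Axs by simp
  qed
  have vi: "regR u z \<ge> regR u (xs n) + inner (w n) (A (j z) - A (j (xs n)))" for n z
  proof -
    have "inner (w n) (A (j z) - A (j (xs n))) = inner (A (j x) - A (j (xs n))) (A (j z) - A (j (xs n))) / al n"
      unfolding w_def by simp
    then show ?thesis using tik_VI[OF A j u alp xs, of n z] by simp
  qed
  have Rxs: "regR u (xs n) \<le> regR u x" for n
  proof -
    have "inner (A (j x) - A (j (xs n))) (A (j x) - A (j (xs n))) / al n \<ge> 0"
      using alp[of n] by simp
    then show ?thesis using tik_VI[OF A j u alp xs, of n x] by linarith
  qed
  obtain U where U: "ultra_nat U" using exists_ultra_nat by blast
  have Unb: "U \<noteq> bot" and Useq: "U \<le> sequentially" using U unfolding ultra_nat_def by auto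
  obtain zs where zs1: "\<And>v. ((\<lambda>k. inner v (A (j (xs k)))) \<longlongrightarrow> inner v (A (j zs))) U"
    and zs2: "\<And>c. eventually (\<lambda>k. regR u (xs k) \<le> c) U \<Longrightarrow> regR u zs \<le> c"
    using KC[OF A j u U exist, where z=xs and C="regR u x", OF Rxs] by blast
  have "inner v (A (j zs)) = inner v (A (j x))" for v
  proof -
    have "((\<lambda>k. inner v (A (j (xs k)))) \<longlongrightarrow> inner v (A (j x))) sequentially"
      by (intro tendsto_inner tendsto_const Axs_lim)
    then have "((\<lambda>k. inner v (A (j (xs k)))) \<longlongrightarrow> inner v (A (j x))) U"
      using Useq by (rule tendsto_mono[rotated])
    then show ?thesis using tendsto_unique[OF Unb zs1] by blast
  qed
  then have "inner (A (j zs) - A (j x)) (A (j zs) - A (j x)) = 0"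
    by (simp add: inner_diff_right)
  then have "A (j zs - j x) = 0" by (simp add: A.diff)
  then have "norm (j zs - j x) / M \<le> 0" using Alow[of "j zs - j x"] by simp
  then have "j zs - j x = 0" using M by (simp add: divide_le_0_iff)
  then have "zs = x" using jinj by (simp add: inj_eq)
  then have zs2': "\<And>c. eventually (\<lambda>k. regR u (xs k) \<le> c) U \<Longrightarrow> regR u x \<le> c"
    using zs2 by blast
  define \<xi> where "\<xi> y = inner wL (A y)" for y
  have xibl: "bounded_linear \<xi>" unfolding \<xi>_def
    by (rule bounded_linear_compose[OF bounded_linear_inner_right A])
  have "onorm \<xi> \<le> M * r"
  proof (rule onorm_bound)
    show "0 \<le> M * r" using M r0 by simp
    fix y
    have "norm (\<xi> y) \<le> norm wL * norm (A y)" unfolding \<xi>_def using Cauchy_Schwarz_ineq2 by simp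
    also have "\<dots> \<le> r * (M * norm y)" using wLr Aup[of y] r0 by (intro mult_mono) auto
    finally show "norm (\<xi> y) \<le> M * r * norm y" by (simp add: algebra_simps)
  qed
  moreover have "(\<xi> \<circ> j) \<in> subdiff_R u x"
    unfolding subdiff_R_def mem_Collect_eq
  proof (intro conjI allI)
    show "bounded_linear (\<xi> \<circ> j)" using bounded_linear_compose[OF xibl j] by (simp add: comp_def)
    fix z
    have xij: "(\<xi> \<circ> j) (z - x) = inner wL (A (j z) - A (j x))"
      unfolding \<xi>_def by (simp add: j.diff A.diff)
    define L where "L = inner wL (A (j z) - A (j x))"
    have hlim: "(\<lambda>n. inner (w n) (A (j z) - A (j (xs n)))) \<longlonglongrightarrow> L"
      unfolding L_def by (intro tendsto_inner wL tendsto_diff tendsto_const Axs_lim)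
    have "regR u x \<le> regR u z - L"
    proof (rule field_le_epsilon)
      fix e :: real assume e: "0 < e"
      have "L - e < L" using e by simp
      then have ev: "eventually (\<lambda>n. L - e < inner (w n) (A (j z) - A (j (xs n)))) sequentially"
        by (rule order_tendstoD(1)[OF hlim])
      have "eventually (\<lambda>n. regR u (xs n) \<le> regR u z - L + e) sequentially"
        using ev by (rule eventually_mono) (use vi in \<open>smt (verit)\<close>)
      then have "eventually (\<lambda>n. regR u (xs n) \<le> regR u z - L + e) U"
        using Useq by (rule filter_leD[rotated])
      then show "regR u x \<le> regR u z - L + e" by (rule zs2')
    qed
    then show "regR u x + (\<xi> \<circ> j) (z - x) \<le> regR u z" unfolding xij L_def by simp
  qed
  ultimately show ?thesis using xibl by blast
qed


theorem proposition4p4: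
  fixes j :: "'x::banach \<Rightarrow> 'xa::banach"
    and A :: "'xa \<Rightarrow> 'y::{real_inner, complete_space}"
    and M u :: real
  assumes j_bl: "bounded_linear j" and j_inj: "inj j" and j_dense: "closure (range j) = UNIV"
    and A_bl: "bounded_linear A"
    and M_ge: "M \<ge> 1"
    and A_bounds: "\<And>x. norm x / M \<le> norm (A x) \<and> norm (A x) \<le> M * norm x"
    and u_ge: "u \<ge> 1"
    and exist: "reflexive_space TYPE('x) \<or> (\<exists>\<tau>. admissible_topology A j u \<tau>)"
  shows "(\<forall>x. rho1 A j u x / ereal M \<le> rho1_bar j u x \<and> rho1_bar j u x \<le> ereal M * rho1 A j u x)
         \<and> (\<forall>x. x \<in> K1 A j u \<longleftrightarrow> (\<exists>\<xi>. bounded_linear \<xi> \<and> (\<xi> \<circ> j) \<in> subdiff_R u x))"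
proof -
  have M: "M > 0" using M_ge by simp
  have Alow: "\<And>y. norm y / M \<le> norm (A y)" and Aup: "\<And>y. norm (A y) \<le> M * norm y"
    using A_bounds by auto
  have rho_le: "rho1 A j u x \<le> ereal (M * onorm \<xi>)"
    if xi: "bounded_linear \<xi>" "(\<xi> \<circ> j) \<in> subdiff_R u x" for x \<xi>
    unfolding rho1_def
  proof (rule Sup_least)
    fix t assume "t \<in> {ereal (norm (A (j x) - A (j xa)) / \<alpha>) | \<alpha> xa.
                        \<alpha> > 0 \<and> xa \<in> tik_min A j u \<alpha> (A (j x))}"
    then obtain \<alpha> xa where t: "t = ereal (norm (A (j x) - A (j xa)) / \<alpha>)" "\<alpha> > 0"
      "xa \<in> tik_min A j u \<alpha> (A (j x))" by blast
    show "t \<le> ereal (M * onorm \<xi>)"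
      unfolding t(1) using bound_xi[OF A_bl j_bl u_ge M Alow t(2,3) xi] by simp
  qed
  have xi_ex: "\<exists>\<xi>. bounded_linear \<xi> \<and> (\<xi> \<circ> j) \<in> subdiff_R u x \<and> onorm \<xi> \<le> M * r"
    if "rho1 A j u x \<le> ereal r" for x r
  proof (rule construct_xi[OF A_bl j_bl u_ge M Alow Aup j_inj exist])
    fix \<alpha> xa assume "\<alpha> > 0" "xa \<in> tik_min A j u \<alpha> (A (j x))"
    then have "ereal (norm (A (j x) - A (j xa)) / \<alpha>) \<le> rho1 A j u x"
      unfolding rho1_def by (intro Sup_upper) blast
    then have "ereal (norm (A (j x) - A (j xa)) / \<alpha>) \<le> ereal r" using that by (rule order_trans)
    then show "norm (A (j x) - A (j xa)) / \<alpha> \<le> r" by simp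
  qed
  have part1: "rho1 A j u x / ereal M \<le> rho1_bar j u x" for x
    unfolding rho1_bar_def
  proof (rule Inf_greatest)
    fix t assume "t \<in> {ereal (onorm \<xi>) | \<xi>. bounded_linear \<xi> \<and> (\<xi> \<circ> j) \<in> subdiff_R u x}"
    then obtain \<xi> where t: "t = ereal (onorm \<xi>)" "bounded_linear \<xi>" "(\<xi> \<circ> j) \<in> subdiff_R u x" by blast
    have le: "rho1 A j u x \<le> ereal (M * onorm \<xi>)" using rho_le[OF t(2,3)] .
    show "rho1 A j u x / ereal M \<le> t"
    proof (cases "rho1 A j u x")
      case (real r)
      then have "r \<le> M * onorm \<xi>" using le by simp
      then have "r / M \<le> onorm \<xi>" using M by (simp add: divide_le_eq mult.commute)
      then show ?thesis using real M t(1) by simp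
    next
      case PInf then show ?thesis using le by simp
    next
      case MInf then show ?thesis using M by simp
    qed
  qed
  have nonempty: "\<exists>xa. xa \<in> tik_min A j u 1 (A (j x))" for x
    by (rule tik_exists[OF A_bl j_bl u_ge _ exist]) simp
  have rho0: "rho1 A j u x \<ge> 0" for x
  proof -
    obtain xa where xa: "xa \<in> tik_min A j u 1 (A (j x))" using nonempty by blast
    have "ereal (norm (A (j x) - A (j xa)) / 1) \<le> rho1 A j u x"
      unfolding rho1_def by (rule Sup_upper) (use xa in \<open>intro CollectI exI[of _ "1::real"] exI[of _ xa]; simp\<close>)
    then show ?thesis by (rule order_trans[rotated]) simp
  qed
  have part2: "rho1_bar j u x \<le> ereal M * rho1 A j u x" for x
  proof (cases "rho1 A j u x")
    case PInf then show ?thesis using M by simp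
  next
    case MInf then show ?thesis using rho0[of x] by simp
  next
    case (real r)
    then obtain \<xi> where xi: "bounded_linear \<xi>" "(\<xi> \<circ> j) \<in> subdiff_R u x" "onorm \<xi> \<le> M * r"
      using xi_ex[of x r] by auto
    have "rho1_bar j u x \<le> ereal (onorm \<xi>)"
      unfolding rho1_bar_def by (rule Inf_lower) (use xi in blast)
    also have "\<dots> \<le> ereal M * ereal r" using xi(3) by simp
    finally show ?thesis using real by simp
  qed
  have part3: "x \<in> K1 A j u \<longleftrightarrow> (\<exists>\<xi>. bounded_linear \<xi> \<and> (\<xi> \<circ> j) \<in> subdiff_R u x)" for x
  proof
    assume "x \<in> K1 A j u"
    then have lt: "rho1 A j u x < \<infinity>" unfolding K1_def by simp
    obtain r where "rho1 A j u x \<le> ereal r"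
    proof (cases "rho1 A j u x")
      case (real r) then show ?thesis using that[of r] by simp
    next
      case PInf then show ?thesis using lt by simp
    next
      case MInf then show ?thesis using that[of 0] by simp
    qed
    then show "\<exists>\<xi>. bounded_linear \<xi> \<and> (\<xi> \<circ> j) \<in> subdiff_R u x" using xi_ex by blast
  next
    assume "\<exists>\<xi>. bounded_linear \<xi> \<and> (\<xi> \<circ> j) \<in> subdiff_R u x"
    then obtain \<xi> where "bounded_linear \<xi>" "(\<xi> \<circ> j) \<in> subdiff_R u x" by blast
    then have "rho1 A j u x \<le> ereal (M * onorm \<xi>)" by (rule rho_le)
    then have "rho1 A j u x < \<infinity>" by (rule le_less_trans) simp
    then show "x \<in> K1 A j u" unfolding K1_def by simp
  qed
  show ?thesis using part1 part2 part3 by blast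
qed

end
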